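(* There exists a constant $\kappa>0$, independent of $r$ and of $s$, such that for every integer $r\ge1$ and every word $s^{(r)}=s_1\dots s_r\in\mathcal A^r$ with $p(s^{(r)})>0$, the generating function $\Phi(s^{(r)},t)=\mathbb E[t^{Y}]$ of the waiting time $Y=\min\{n\ge r: (U_n,U_{n-1},\dots,U_{n-r+1})=(s_1,\dots,s_r)\}$ has radius of convergence at least $1+\kappa\,p(s^{(r)})$.
   Context: Alphabet $\mathcal A=\{A,C,G,T\}$. $U=(U_n)_{n\ge1}$ is a stationary Markov chain of order 1 on $\mathcal A$ with transition matrix $Q$ (irreducible and aperiodic) started from its invariant measure $p$ (so $p(u)>0$ for all $u$). $p(s^{(r)}):=\mathbb P(U_1=s_r,U_2=s_{r-1},\dots,U_r=s_1)$. *)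

theory Defs
  imports "HOL-Analysis.Analysis"
begin

datatype nucl = A | C | G | T

lemma UNIV_nucl: "(UNIV :: nucl set) = {A, C, G, T}"
  using nucl.exhaust by auto

instance nucl :: finite
  by standard (simp add: UNIV_nucl)

fun mpow :: "(nucl \<Rightarrow> nucl \<Rightarrow> real) \<Rightarrow> nat \<Rightarrow> nucl \<Rightarrow> nucl \<Rightarrow> real" where
  "mpow Q 0 u v = (if u = v then 1 else 0)"
| "mpow Q (Suc n) u v = (\<Sum>w\<in>UNIV. mpow Q n u w * Q w v)"

definition stochastic :: "(nucl \<Rightarrow> nucl \<Rightarrow> real) \<Rightarrow> bool" where
  "stochastic Q \<longleftrightarrow> (\<forall>u v. Q u v \<ge> 0) \<and> (\<forall>u. (\<Sum>v\<in>UNIV. Q u v) = 1)"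

definition irreducible_chain :: "(nucl \<Rightarrow> nucl \<Rightarrow> real) \<Rightarrow> bool" where
  "irreducible_chain Q \<longleftrightarrow> (\<forall>u v. \<exists>n. mpow Q n u v > 0)"

definition period :: "(nucl \<Rightarrow> nucl \<Rightarrow> real) \<Rightarrow> nucl \<Rightarrow> nat" where
  "period Q u = Gcd {n. n \<ge> 1 \<and> mpow Q n u u > 0}"

definition aperiodic_chain :: "(nucl \<Rightarrow> nucl \<Rightarrow> real) \<Rightarrow> bool" where
  "aperiodic_chain Q \<longleftrightarrow> (\<forall>u. period Q u = 1)"

definition invariant_measure :: "(nucl \<Rightarrow> nucl \<Rightarrow> real) \<Rightarrow> (nucl \<Rightarrow> real) \<Rightarrow> bool" where
  "invariant_measure Q p \<longleftrightarrow> (\<forall>u. p u \<ge> 0) \<and> (\<Sum>u\<in>UNIV. p u) = 1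
      \<and> (\<forall>v. (\<Sum>u\<in>UNIV. p u * Q u v) = p v)"

fun trans_prod :: "(nucl \<Rightarrow> nucl \<Rightarrow> real) \<Rightarrow> nucl \<Rightarrow> nucl list \<Rightarrow> real" where
  "trans_prod Q x [] = 1"
| "trans_prod Q x (y # ys) = Q x y * trans_prod Q y ys"

text \<open>path_prob p Q [w1,...,wn] = P(U_1 = w1, ..., U_n = wn).\<close>
fun path_prob :: "(nucl \<Rightarrow> real) \<Rightarrow> (nucl \<Rightarrow> nucl \<Rightarrow> real) \<Rightarrow> nucl list \<Rightarrow> real" where
  "path_prob p Q [] = 1"
| "path_prob p Q (x # xs) = p x * trans_prod Q x xs"

text \<open>For a word s = [s_1,...,s_r], p(s^(r)) = P(U_1=s_r, ..., U_r=s_1).\<close>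
definition word_prob :: "(nucl \<Rightarrow> real) \<Rightarrow> (nucl \<Rightarrow> nucl \<Rightarrow> real) \<Rightarrow> nucl list \<Rightarrow> real" where
  "word_prob p Q s = path_prob p Q (rev s)"

text \<open>The path [U_1,...,U_n] satisfies (U_n,...,U_{n-r+1}) = (s_1,...,s_r) with n >= r.\<close>
definition ends_with_word :: "nucl list \<Rightarrow> nucl list \<Rightarrow> bool" where
  "ends_with_word s w \<longleftrightarrow> length w \<ge> length s \<and> drop (length w - length s) w = rev s"

text \<open>P(Y = n), Y = min{n >= r : (U_n,...,U_{n-r+1}) = (s_1,...,s_r)}.\<close>
definition waiting_prob :: "(nucl \<Rightarrow> real) \<Rightarrow> (nucl \<Rightarrow> nucl \<Rightarrow> real) \<Rightarrow> nucl list \<Rightarrow> nat \<Rightarrow> real" where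
  "waiting_prob p Q s n =
     (\<Sum>w\<in>{w. length w = n \<and> ends_with_word s w \<and> (\<forall>m<n. \<not> ends_with_word s (take m w))}.
        path_prob p Q w)"

end

theory Submission
  imports Defs
begin


definition lenL :: "nat \<Rightarrow> nucl list set" where "lenL n = {w. length w = n}"

lemma finite_lenL[simp]: "finite (lenL n)"
  unfolding lenL_def using finite_lists_length_eq[of "UNIV::nucl set" n] by simp

lemma lenL_Suc: "lenL (Suc n) = (\<lambda>(a,w). a#w) ` (UNIV \<times> lenL n)"
  unfolding lenL_def by (auto simp: length_Suc_conv)

lemma sum_lenL_Suc: "(\<Sum>w\<in>lenL (Suc n). F w) = (\<Sum>a\<in>UNIV. \<Sum>v\<in>lenL n. F (a#v))"
proof -
  have inj: "inj_on (\<lambda>(a,w). a#w) (UNIV \<times> lenL n)" by (auto simp: inj_on_def)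
  have "(\<Sum>w\<in>lenL (Suc n). F w) = (\<Sum>x\<in>UNIV \<times> lenL n. F ((\<lambda>(a,w). a#w) x))"
    unfolding lenL_Suc by (rule sum.reindex[OF inj, unfolded comp_def])
  also have "\<dots> = (\<Sum>a\<in>UNIV. \<Sum>v\<in>lenL n. F (a#v))"
    unfolding sum.cartesian_product by (rule sum.cong) auto
  finally show ?thesis .
qed

lemma lenL_add: "lenL (n+m) = (\<lambda>(u,v). u@v) ` (lenL n \<times> lenL m)"
proof
  show "lenL (n+m) \<subseteq> (\<lambda>(u,v). u@v) ` (lenL n \<times> lenL m)"
  proof
    fix w assume "w \<in> lenL (n+m)"
    then show "w \<in> (\<lambda>(u,v). u@v) ` (lenL n \<times> lenL m)"
      unfolding lenL_def by (intro image_eqI[of _ _ "(take n w, drop n w)"]) auto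
  qed
qed (auto simp: lenL_def)

lemma sum_lenL_add: "(\<Sum>w\<in>lenL (n+m). F w) = (\<Sum>u\<in>lenL n. \<Sum>v\<in>lenL m. F (u@v))"
proof -
  have inj: "inj_on (\<lambda>(u,v). u@v) (lenL n \<times> lenL m)" by (auto simp: inj_on_def lenL_def)
  have "(\<Sum>w\<in>lenL (n+m). F w) = (\<Sum>x\<in>lenL n \<times> lenL m. F ((\<lambda>(u,v). u@v) x))"
    unfolding lenL_add by (rule sum.reindex[OF inj, unfolded comp_def])
  also have "\<dots> = (\<Sum>u\<in>lenL n. \<Sum>v\<in>lenL m. F (u@v))"
    unfolding sum.cartesian_product by (rule sum.cong) auto
  finally show ?thesis .
qed

lemma lenL_0[simp]: "lenL 0 = {[]}" by (auto simp: lenL_def)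

lemma sum_lenL_1: "(\<Sum>w\<in>lenL 1. F w) = (\<Sum>a\<in>UNIV. F [a])"
  using sum_lenL_Suc[where n=0 and F=F] by simp

lemma trans_prod_append: "trans_prod Q x (u @ v) = trans_prod Q x u * trans_prod Q (last (x#u)) v"
  by (induction u arbitrary: x) auto

lemma trans_prod_nonneg: "stochastic Q \<Longrightarrow> trans_prod Q x u \<ge> 0"
  by (induction u arbitrary: x) (auto simp: stochastic_def)

lemma trans_prod_le1: "stochastic Q \<Longrightarrow> trans_prod Q x u \<le> 1"
proof (induction u arbitrary: x)
  case (Cons a u)
  then show ?case using trans_prod_nonneg[OF Cons.prems, of a u]
    by (auto simp: stochastic_def intro!: mult_le_one)
      (metis UNIV_I finite_class.finite_UNIV member_le_sum)
qed simp

lemma sum_trans: "stochastic Q \<Longrightarrow> (\<Sum>w\<in>lenL n. trans_prod Q x w) = 1"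
proof (induction n arbitrary: x)
  case (Suc n)
  then show ?case by (simp add: sum_lenL_Suc sum_distrib_left[symmetric] stochastic_def)
qed simp

lemma last_append_Cons: "last (x # u @ w) = last (last (x#u) # w)"
  by (cases w) auto

context fixes Q :: "nucl \<Rightarrow> nucl \<Rightarrow> real" assumes st: "stochastic Q"
begin

lemma markov:
  assumes "i + d \<le> N"
  shows "(\<Sum>v\<in>lenL N. trans_prod Q x v * f (take i v) * g (take d (drop i v)))
       = (\<Sum>u\<in>lenL i. trans_prod Q x u * f u * (\<Sum>w\<in>lenL d. trans_prod Q (last (x#u)) w * g w))"
proof -
  obtain k where N: "N = i + (d + k)" using assms by (metis add.assoc le_add_diff_inverse)
  have "(\<Sum>v\<in>lenL N. trans_prod Q x v * f (take i v) * g (take d (drop i v)))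
     = (\<Sum>u\<in>lenL i. \<Sum>w\<in>lenL d. \<Sum>z\<in>lenL k. trans_prod Q x (u@w@z) * f (take i (u@w@z)) * g (take d (drop i (u@w@z))))"
    unfolding N sum_lenL_add by simp
  also have "\<dots> = (\<Sum>u\<in>lenL i. \<Sum>w\<in>lenL d. \<Sum>z\<in>lenL k. trans_prod Q x u * f u * (trans_prod Q (last (x#u)) w * g w) * trans_prod Q (last (last (x#u) # w)) z)"
    by (intro sum.cong refl) (simp add: lenL_def trans_prod_append last_append_Cons)
  also have "\<dots> = (\<Sum>u\<in>lenL i. \<Sum>w\<in>lenL d. trans_prod Q x u * f u * (trans_prod Q (last (x#u)) w * g w))"
    by (simp add: sum_distrib_left[symmetric] sum_trans[OF st])
  also have "\<dots> = (\<Sum>u\<in>lenL i. trans_prod Q x u * f u * (\<Sum>w\<in>lenL d. trans_prod Q (last (x#u)) w * g w))"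
    by (simp add: sum_distrib_left)
  finally show ?thesis .
qed

lemma prefix_sum:
  assumes "n \<le> N"
  shows "(\<Sum>v\<in>lenL N. trans_prod Q x v * f (take n v)) = (\<Sum>u\<in>lenL n. trans_prod Q x u * f u)"
  using markov[where i=n and d=0 and N=N and x=x and f=f and g="\<lambda>_. 1"] assms by simp

lemma LH: "(\<Sum>u\<in>lenL k. trans_prod Q x u * h (last (x#u))) = (\<Sum>y\<in>UNIV. mpow Q k x y * h y)"
proof (induction k arbitrary: h)
  case 0
  have "(\<Sum>y\<in>UNIV. mpow Q 0 x y * h y) = (\<Sum>y\<in>UNIV. (if y = x then h x else 0))"
    by (intro sum.cong) auto
  then show ?case by simp
next
  case (Suc k)
  have "(\<Sum>u\<in>lenL (Suc k). trans_prod Q x u * h (last (x#u)))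
      = (\<Sum>u\<in>lenL k. \<Sum>a\<in>UNIV. trans_prod Q x (u@[a]) * h (last (x#u@[a])))"
    unfolding Suc_eq_plus1 sum_lenL_add sum_lenL_1 by simp
  also have "\<dots> = (\<Sum>u\<in>lenL k. trans_prod Q x u * (\<lambda>z. \<Sum>a\<in>UNIV. Q z a * h a) (last (x#u)))"
    by (simp add: trans_prod_append sum_distrib_left mult.assoc)
  also have "\<dots> = (\<Sum>y\<in>UNIV. mpow Q k x y * (\<Sum>a\<in>UNIV. Q y a * h a))"
    by (rule Suc.IH)
  also have "\<dots> = (\<Sum>a\<in>UNIV. mpow Q (Suc k) x a * h a)"
    by (simp add: sum_distrib_left sum_distrib_right mult.assoc) (rule sum.swap)
  finally show ?case .
qed

lemma mpow_repr: "mpow Q k x y = (\<Sum>u\<in>lenL k. trans_prod Q x u * (if last (x#u) = y then 1 else 0))"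
  by (subst LH) (simp add: if_distrib cong: if_cong)

lemma mpow_nonneg: "mpow Q k x y \<ge> 0"
  unfolding mpow_repr by (intro sum_nonneg mult_nonneg_nonneg trans_prod_nonneg[OF st]) auto

lemma mpow_rowsum: "(\<Sum>y\<in>UNIV. mpow Q k x y) = 1"
  using LH[where k=k and x=x and h="\<lambda>_. 1"] by (simp add: sum_trans[OF st])

lemma mpow_le1: "mpow Q k x y \<le> 1"
  using mpow_rowsum[of k x] mpow_nonneg
  by (metis UNIV_I finite_class.finite_UNIV member_le_sum)

lemma CK: "mpow Q (a+b) x y = (\<Sum>z\<in>UNIV. mpow Q a x z * mpow Q b z y)"
proof -
  have "mpow Q (a+b) x y = (\<Sum>u\<in>lenL a. \<Sum>w\<in>lenL b. trans_prod Q x (u@w) * (if last (x#u@w) = y then 1 else 0))"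
    unfolding mpow_repr sum_lenL_add by simp
  also have "\<dots> = (\<Sum>u\<in>lenL a. trans_prod Q x u * mpow Q b (last (x#u)) y)"
    unfolding trans_prod_append last_append_Cons mpow_repr[where k=b] mult.assoc sum_distrib_left ..
  also have "\<dots> = (\<Sum>z\<in>UNIV. mpow Q a x z * mpow Q b z y)"
    by (rule LH)
  finally show ?thesis .
qed

end


lemma card_nucl: "card (UNIV :: nucl set) = 4"
  unfolding UNIV_nucl by simp

lemma det_zero:
  assumes st: "stochastic Q" and q: "Q a b = 1" and ne: "b' \<noteq> b"
  shows "Q a b' = 0"
proof -
  have nn: "\<And>u v. Q u v \<ge> 0" and s1: "(\<Sum>v\<in>UNIV. Q a v) = 1" using st by (auto simp: stochastic_def)
  have "(\<Sum>v\<in>UNIV. Q a v) = Q a b + (\<Sum>v\<in>UNIV - {b}. Q a v)"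
    by (simp add: sum.remove)
  hence z: "(\<Sum>v\<in>UNIV - {b}. Q a v) = 0" using s1 q by simp
  have "Q a b' \<le> (\<Sum>v\<in>UNIV - {b}. Q a v)"
    by (rule member_le_sum) (use ne nn in auto)
  thus ?thesis using z nn[of a b'] by simp
qed

lemma no_det_path:
  assumes st: "stochastic Q" and irr: "irreducible_chain Q" and ap: "aperiodic_chain Q"
    and det: "\<forall>k<4. Q (x k) (x (Suc k)) = 1"
  shows False
proof -
  have "\<not> inj_on x {0..4::nat}"
  proof
    assume "inj_on x {0..4::nat}"
    hence "card (x ` {0..4}) = 5" by (simp add: card_image)
    moreover have "card (x ` {0..4}) \<le> card (UNIV :: nucl set)" by (rule card_mono) auto
    ultimately show False by (simp add: card_nucl)
  qed
  then obtain a b where ab: "a \<le> 4" "b \<le> 4" "a \<noteq> b" "x a = x b" unfolding inj_on_def by auto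
  obtain i j where ij: "i < j" "j \<le> (4::nat)" "x i = x j"
    using ab by (metis linorder_neqE_nat)
  define c where "c = j - i"
  have c0: "c > 0" "c \<le> 4" using ij by (auto simp: c_def)
  define y where "y n = x (i + n mod c)" for n
  have ydet: "Q (y n) (y (Suc n)) = 1" for n
  proof (cases "Suc (n mod c) = c")
    case True
    hence "Suc n mod c = 0" by (simp add: mod_Suc)
    hence "y (Suc n) = x j" using ij by (simp add: y_def)
    moreover have "j = Suc (i + n mod c)" using True ij by (simp add: c_def)
    moreover have "i + n mod c < 4" using True ij by (simp add: c_def)
    ultimately show ?thesis using det by (simp add: y_def)
  next
    case False
    hence "Suc n mod c = Suc (n mod c)" by (simp add: mod_Suc)
    moreover have "i + n mod c < 4" using False ij c0 unfolding c_def
      by (metis add_Suc_right le_add_diff_inverse less_SucE less_le_trans mod_less_divisor nat_add_left_cancel_less order_less_imp_le)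
    ultimately show ?thesis using det by (simp add: y_def)
  qed
  have Qy: "Q (y n) b = (if b = y (Suc n) then 1 else 0)" for n b
    using det_zero[OF st ydet[of n]] ydet[of n] by auto
  have mp: "mpow Q n (y 0) b = (if b = y n then 1 else 0)" for n b
  proof (induction n arbitrary: b)
    case (Suc n)
    have "mpow Q (Suc n) (y 0) b = (\<Sum>w\<in>UNIV. (if w = y n then Q w b else 0))"
      unfolding mpow.simps by (intro sum.cong) (simp_all add: Suc.IH)
    also have "\<dots> = Q (y n) b" by simp
    finally show ?case by (simp add: Qy)
  qed (simp add: y_def)
  have ymod: "y n = y (n mod c)" for n by (simp add: y_def)
  have "UNIV \<subseteq> y ` {..<c}"
  proof
    fix b :: nucl
    obtain n where "mpow Q n (y 0) b > 0" using irr unfolding irreducible_chain_def by blast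
    hence "b = y n" by (simp add: mp split: if_splits)
    hence "b = y (n mod c)" by (simp add: ymod[symmetric])
    thus "b \<in> y ` {..<c}" using c0 by auto
  qed
  hence "4 \<le> card (y ` {..<c})" using card_mono[of "y ` {..<c}" UNIV] by (simp add: card_nucl)
  moreover have "card (y ` {..<c}) \<le> c" using card_image_le[of "{..<c}" y] by simp
  ultimately have c4: "c = 4" and cardy: "card (y ` {..<c}) = card {..<c}" using c0 by auto
  have inj: "inj_on y {..<4}" using cardy c4 by (simp add: inj_on_iff_eq_card)
  have "4 dvd n" if "n \<in> {n. n \<ge> 1 \<and> mpow Q n (y 0) (y 0) > 0}" for n
  proof -
    from that have "y 0 = y n" by (simp add: mp split: if_splits)
    hence "y 0 = y (n mod 4)" using ymod c4 by metis
    hence "0 = n mod 4" using inj unfolding inj_on_def by auto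
    thus ?thesis by auto
  qed
  hence "4 dvd period Q (y 0)" unfolding period_def by (intro Gcd_greatest) blast
  moreover have "period Q (y 0) = 1" using ap by (simp add: aperiodic_chain_def)
  ultimately show False by simp
qed

definition theta :: "(nucl \<Rightarrow> nucl \<Rightarrow> real) \<Rightarrow> real" where
  "theta Q = Max (insert 0 ((\<lambda>(u,v). if Q u v < 1 then Q u v else 0) ` UNIV))"

lemma theta_lt1: "theta Q < 1"
proof -
  have "theta Q \<in> insert 0 ((\<lambda>(u,v). if Q u v < 1 then Q u v else 0) ` UNIV)"
    unfolding theta_def by (rule Max_in) auto
  thus ?thesis by (auto split: if_splits)
qed

lemma theta_ge: "Q u v < 1 \<Longrightarrow> Q u v \<le> theta Q"
  unfolding theta_def by (rule Max_ge_iff[THEN iffD2]) (auto intro!: bexI[of _ "(u,v)"])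

lemma theta_nonneg: "theta Q \<ge> 0"
  unfolding theta_def by (rule Max_ge_iff[THEN iffD2]) auto

lemma mult4_le:
  fixes a b c d t :: real
  assumes "0 \<le> a" "a \<le> 1" "0 \<le> b" "b \<le> 1" "0 \<le> c" "c \<le> 1" "0 \<le> d" "d \<le> 1" "0 \<le> t"
    and "a \<le> t \<or> b \<le> t \<or> c \<le> t \<or> d \<le> t"
  shows "a * (b * (c * d)) \<le> t"
proof -
  have cd1: "c * d \<le> 1" "0 \<le> c * d" using assms by (auto intro!: mult_le_one)
  have bcd1: "b * (c * d) \<le> 1" "0 \<le> b * (c*d)" using assms cd1 by (auto intro!: mult_le_one)
  have p1: "a * (b * (c * d)) \<le> a" using mult_right_le_one_le[of a "b*(c*d)"] assms bcd1 by simp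
  have p2: "a * (b * (c * d)) \<le> b * (c * d)" using mult_left_le_one_le[of "b*(c*d)" a] assms bcd1 by simp
  have p3: "b * (c * d) \<le> b" using mult_right_le_one_le[of b "c*d"] assms cd1 by simp
  have p4: "b * (c * d) \<le> c * d" using mult_left_le_one_le[of "c*d" b] assms cd1 by simp
  have p5: "c * d \<le> c" using mult_right_le_one_le[of c d] assms by simp
  have p6: "c * d \<le> d" using mult_left_le_one_le[of d c] assms by simp
  show ?thesis using assms(10) p1 p2 p3 p4 p5 p6 by linarith
qed

context fixes Q :: "nucl \<Rightarrow> nucl \<Rightarrow> real"
  assumes st: "stochastic Q" and irr: "irreducible_chain Q" and ap: "aperiodic_chain Q"
begin

lemma Q_nn: "Q u v \<ge> 0" and Q_le1: "Q u v \<le> 1"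
  using st trans_prod_le1[OF st, of u "[v]"] by (auto simp: stochastic_def)

lemma path4: "length w = 4 \<Longrightarrow> trans_prod Q z w \<le> theta Q"
proof -
  assume "length w = 4"
  then obtain a b c d where w: "w = [a,b,c,d]"
    by (auto simp: length_Suc_conv numeral_eq_Suc)
  define x where "x k = ([z,a,b,c,d] ! k)" for k
  have "\<not> (\<forall>k<4. Q (x k) (x (Suc k)) = 1)"
    using no_det_path[OF st irr ap] by blast
  hence "\<exists>k<4. Q (x k) (x (Suc k)) < 1"
    using Q_le1 by (meson le_less)
  then obtain k where k: "k < 4" "Q (x k) (x (Suc k)) < 1" by blast
  have "k = 0 \<or> k = 1 \<or> k = 2 \<or> k = 3" using k(1) by linarith
  then have some: "Q z a \<le> theta Q \<or> Q a b \<le> theta Q \<or> Q b c \<le> theta Q \<or> Q c d \<le> theta Q"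
    using theta_ge[where Q=Q, OF k(2)] unfolding x_def by (elim disjE) (simp_all add: numeral_eq_Suc)
  show ?thesis unfolding w
    using mult4_le[OF Q_nn Q_le1 Q_nn Q_le1 Q_nn Q_le1 Q_nn Q_le1 theta_nonneg some] by simp
qed

lemma decay: "trans_prod Q z w \<le> theta Q ^ (length w div 4)"
proof (induction "length w" arbitrary: z w rule: less_induct)
  case less
  show ?case
  proof (cases "length w < 4")
    case True
    then show ?thesis using trans_prod_le1[OF st] by simp
  next
    case False
    have "trans_prod Q z w = trans_prod Q z (take 4 w) * trans_prod Q (last (z # take 4 w)) (drop 4 w)"
      by (subst trans_prod_append[symmetric]) simp
    also have "\<dots> \<le> theta Q * theta Q ^ (length (drop 4 w) div 4)"
      using False less[of "drop 4 w"] path4[of "take 4 w"]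
      by (intro mult_mono) (auto intro: trans_prod_nonneg[OF st] theta_nonneg)
    also have "\<dots> = theta Q ^ (length w div 4)"
    proof -
      have "length w div 4 = Suc ((length w - 4) div 4)" using False
        by (simp add: le_div_geq)
      thus ?thesis by simp
    qed
    finally show ?thesis .
  qed
qed

end



context fixes Q :: "nucl \<Rightarrow> nucl \<Rightarrow> real"
  assumes st: "stochastic Q" and irr: "irreducible_chain Q"
begin

lemma CK_ge: "mpow Q (a+b) x y \<ge> mpow Q a x z * mpow Q b z y"
  unfolding CK[OF st] by (rule member_le_sum) (auto intro: mult_nonneg_nonneg mpow_nonneg[OF st])

lemma window: "\<exists>L \<epsilon>. \<epsilon> > 0 \<and> \<epsilon> \<le> 1 \<and> (\<forall>x y b M. (\<Sum>k<M. mpow Q (b+k) x y) \<ge> \<epsilon>/4 * (real M - real L))"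
proof -
  define n where "n z y = (SOME n. mpow Q n z y > 0)" for z y
  have n: "mpow Q (n z y) z y > 0" for z y
    unfolding n_def using irr unfolding irreducible_chain_def by (metis someI_ex)
  define L where "L = Max ((\<lambda>(z,y). n z y) ` UNIV)"
  define \<epsilon> where "\<epsilon> = min 1 (Min ((\<lambda>(z,y). mpow Q (n z y) z y) ` UNIV))"
  have nL: "n z y \<le> L" for z y unfolding L_def by (rule Max_ge) auto
  have "0 < Min ((\<lambda>(z,y). mpow Q (n z y) z y) ` UNIV)" using n by (subst Min_gr_iff) auto
  hence e0: "\<epsilon> > 0" unfolding \<epsilon>_def by simp
  have e1: "\<epsilon> \<le> 1" unfolding \<epsilon>_def by simp
  have ele: "\<epsilon> \<le> mpow Q (n z y) z y" for z y
    unfolding \<epsilon>_def by (rule min.coboundedI2, rule Min_le) auto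
  have main: "(\<Sum>k<M. mpow Q (b+k) x y) \<ge> \<epsilon>/4 * (real M - real L)" for x y b M
  proof (cases "M \<le> L")
    case True
    have "\<epsilon>/4 * (real M - real L) \<le> 0" using True e0 by (simp add: mult_nonneg_nonpos)
    also have "0 \<le> (\<Sum>k<M. mpow Q (b+k) x y)" by (intro sum_nonneg mpow_nonneg[OF st])
    finally show ?thesis .
  next
    case False
    define K where "K = M - L"
    have sub: "(\<Sum>k<K. mpow Q (b + k + n z y) x y) \<le> (\<Sum>k<M. mpow Q (b+k) x y)" for z
    proof -
      have "(\<Sum>k<K. mpow Q (b + k + n z y) x y) = (\<Sum>k\<in>(\<lambda>k. k + n z y) ` {..<K}. mpow Q (b+k) x y)"
        by (subst sum.reindex) (auto simp: inj_on_def add.assoc)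
      also have "\<dots> \<le> (\<Sum>k<M. mpow Q (b+k) x y)"
        using nL[of z y] False
        by (intro sum_mono2) (auto simp: K_def intro: mpow_nonneg[OF st])
      finally show ?thesis .
    qed
    have "real K * \<epsilon> = (\<Sum>k<K. \<Sum>z\<in>UNIV. mpow Q (b+k) x z * \<epsilon>)"
      by (simp add: sum_distrib_right[symmetric] mpow_rowsum[OF st])
    also have "\<dots> \<le> (\<Sum>k<K. \<Sum>z\<in>UNIV. mpow Q (b + k + n z y) x y)"
    proof (intro sum_mono)
      fix k z
      have "mpow Q (b+k) x z * \<epsilon> \<le> mpow Q (b+k) x z * mpow Q (n z y) z y"
        by (intro mult_left_mono ele mpow_nonneg[OF st])
      also have "\<dots> \<le> mpow Q (b + k + n z y) x y" by (rule CK_ge)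
      finally show "mpow Q (b+k) x z * \<epsilon> \<le> mpow Q (b + k + n z y) x y" .
    qed
    also have "\<dots> = (\<Sum>z\<in>UNIV. \<Sum>k<K. mpow Q (b + k + n z y) x y)" by (rule sum.swap)
    also have "\<dots> \<le> (\<Sum>z\<in>(UNIV::nucl set). \<Sum>k<M. mpow Q (b+k) x y)" by (intro sum_mono sub)
    also have "\<dots> = 4 * (\<Sum>k<M. mpow Q (b+k) x y)" by (simp add: card_nucl)
    finally have "real K * \<epsilon> \<le> 4 * (\<Sum>k<M. mpow Q (b+k) x y)" .
    moreover have "real K = real M - real L" using False by (simp add: K_def)
    ultimately show ?thesis by (simp add: field_simps)
  qed
  show ?thesis using e0 e1 main by blast
qed

end


lemma sum_delta_lenL:
  assumes "length a = n"
  shows "(\<Sum>w\<in>lenL n. F w * of_bool (w = a)) = (F a :: real)"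
proof -
  have "(\<Sum>w\<in>lenL n. F w * of_bool (w = a)) = (\<Sum>w\<in>lenL n. if w = a then F w else 0)"
    by (intro sum.cong) auto
  also have "\<dots> = F a" using assms by (subst sum.delta[OF finite_lenL]) (simp add: lenL_def)
  finally show ?thesis .
qed

lemma sq_count:
  fixes b :: "nat \<Rightarrow> real"
  assumes "\<And>i. b i = 0 \<or> b i = 1"
  shows "(\<Sum>i<M. b i)^2 = (\<Sum>i<M. b i * (1 + 2 * (\<Sum>k\<in>{i<..<M}. b k)))"
proof (induction M)
  case 0 then show ?case by simp
next
  case (Suc M)
  have bb: "b M * b M = b M" using assms[of M] by auto
  have em: "{M<..<Suc M} = {}" by auto
  have split: "(\<Sum>k\<in>{i<..<Suc M}. b k) = (\<Sum>k\<in>{i<..<M}. b k) + b M" if "i < M" for i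
  proof -
    have "{i<..<Suc M} = insert M {i<..<M}" using that by auto
    thus ?thesis by simp
  qed
  have "(\<Sum>i<Suc M. b i * (1 + 2 * (\<Sum>k\<in>{i<..<Suc M}. b k)))
      = (\<Sum>i<M. b i * (1 + 2 * (\<Sum>k\<in>{i<..<M}. b k)) + 2 * b i * b M) + b M"
    by (simp add: split algebra_simps em)
  also have "\<dots> = (\<Sum>i<M. b i)^2 + 2 * (\<Sum>i<M. b i) * b M + b M"
    by (simp add: Suc.IH sum.distrib sum_distrib_right sum_distrib_left mult.assoc)
  also have "\<dots> = (\<Sum>i<Suc M. b i)^2"
    by (simp add: power2_eq_square algebra_simps bb)
  finally show ?case by simp
qed

lemma geo_div4:
  fixes t :: real assumes "0 \<le> t" "t < 1"
  shows "(\<Sum>d<n. t ^ (d div 4)) \<le> 4 / (1 - t)"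
proof -
  have eq: "(\<Sum>d<4*m. t ^ (d div 4)) = 4 * (\<Sum>q<m. t ^ q)" for m
  proof (induction m)
    case (Suc m)
    have e: "4 * Suc m = Suc (Suc (Suc (Suc (4*m))))" by simp
    have "(\<Sum>d<4 * Suc m. t ^ (d div 4)) = (\<Sum>d<4*m. t ^ (d div 4)) + t ^ ((4*m) div 4) + t ^ (Suc (4*m) div 4)
       + t ^ (Suc (Suc (4*m)) div 4) + t ^ (Suc (Suc (Suc (4*m))) div 4)"
      by (simp only: e sum.lessThan_Suc)
    also have "\<dots> = (\<Sum>d<4*m. t ^ (d div 4)) + 4 * t ^ m"
    proof -
      have "Suc (4*m) div 4 = m" "Suc (Suc (4*m)) div 4 = m" "Suc (Suc (Suc (4*m))) div 4 = m" by presburger+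
      thus ?thesis by simp
    qed
    finally show ?case using Suc by simp
  qed simp
  have "(\<Sum>d<n. t ^ (d div 4)) \<le> (\<Sum>d<4*n. t ^ (d div 4))"
    using assms by (intro sum_mono2) auto
  also have "\<dots> = 4 * (\<Sum>q<n. t ^ q)" by (rule eq)
  also have "(\<Sum>q<n. t ^ q) = (1 - t^n) / (1 - t)" using assms by (simp add: sum_gp_strict)
  also have "4 * ((1 - t^n) / (1 - t)) \<le> 4 / (1 - t)"
    using assms by (simp add: divide_right_mono)
  finally show ?thesis by simp
qed

lemma shift_sum_le:
  fixes h :: "nat \<Rightarrow> real" assumes "\<And>d. h d \<ge> 0"
  shows "(\<Sum>k\<in>{i<..<M}. h (k - i)) \<le> (\<Sum>d<M. h d)"
proof -
  have "(\<Sum>k\<in>{i<..<M}. h (k - i)) = (\<Sum>d\<in>(\<lambda>k. k - i) ` {i<..<M}. h d)"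
    by (subst sum.reindex) (auto simp: inj_on_def)
  also have "\<dots> \<le> (\<Sum>d<M. h d)" using assms by (intro sum_mono2) auto
  finally show ?thesis .
qed

context fixes Q :: "nucl \<Rightarrow> nucl \<Rightarrow> real" and s :: "nucl list"
  assumes st: "stochastic Q" and irr: "irreducible_chain Q" and ap: "aperiodic_chain Q"
    and sne: "length s \<ge> 1"
begin

abbreviation "r \<equiv> length s"
abbreviation "rs \<equiv> rev s"
abbreviation "sr \<equiv> hd (rev s)"
abbreviation "TT \<equiv> trans_prod Q (hd (rev s)) (tl (rev s))"

lemma rs_ne: "rs \<noteq> []" using sne by auto

lemma trans_rs: "trans_prod Q y rs = Q y sr * TT"
proof -
  have "rs = sr # tl rs" using rs_ne by simp
  then show ?thesis by (metis trans_prod.simps(2))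
qed

lemma TT_nn: "TT \<ge> 0" by (rule trans_prod_nonneg[OF st])
lemma TT_le1: "TT \<le> 1" by (rule trans_prod_le1[OF st])

lemma EB:
  assumes "k + r \<le> N"
  shows "(\<Sum>v\<in>lenL N. trans_prod Q z v * of_bool (take r (drop k v) = rs)) = TT * mpow Q (Suc k) z sr"
proof -
  have inner: "\<And>y. (\<Sum>w\<in>lenL r. trans_prod Q y w * of_bool (w = rs)) = trans_prod Q y rs"
    by (rule sum_delta_lenL) simp
  have "(\<Sum>v\<in>lenL N. trans_prod Q z v * of_bool (take r (drop k v) = rs))
      = (\<Sum>v\<in>lenL N. trans_prod Q z v * (\<lambda>_. 1) (take k v) * (\<lambda>w. of_bool (w = rs)) (take r (drop k v)))"
    by simp
  also have "\<dots> = (\<Sum>u\<in>lenL k. trans_prod Q z u * 1 * (\<Sum>w\<in>lenL r. trans_prod Q (last (z#u)) w * of_bool (w = rs)))"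
    by (rule markov[OF st]) (use assms in simp)
  also have "\<dots> = (\<Sum>u\<in>lenL k. trans_prod Q z u * (\<lambda>y. Q y sr * TT) (last (z#u)))"
    using inner by (simp only: trans_rs mult_1_right)
  also have "\<dots> = (\<Sum>y\<in>UNIV. mpow Q k z y * (Q y sr * TT))" by (rule LH[OF st])
  also have "\<dots> = TT * mpow Q (Suc k) z sr"
    by (simp add: sum_distrib_right sum_distrib_left mult_ac)
  finally show ?thesis .
qed

lemma last_rs_u:
  assumes "drop i u = rs"
  shows "last (x#u) = last rs"
proof -
  have "u = take i u @ rs" using assms by (metis append_take_drop_id)
  then have "last u = last rs" using rs_ne by (metis last_append)
  moreover have "u \<noteq> []" using assms rs_ne by auto
  ultimately show ?thesis by simp
qed

lemma pair_gen:
  fixes g :: "nucl list \<Rightarrow> real"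
  assumes N: "i + r + d \<le> N" and gnn: "\<And>w. g w \<ge> 0"
    and H: "\<And>v. length v = N \<Longrightarrow> take r (drop i v) = rs \<Longrightarrow> take r (drop k v) = rs
              \<Longrightarrow> 1 \<le> g (take d (drop (i+r) v))"
    and inner: "(\<Sum>w\<in>lenL d. trans_prod Q (last rs) w * g w) \<le> c"
  shows "(\<Sum>v\<in>lenL N. trans_prod Q x v * (of_bool (take r (drop i v) = rs) * of_bool (take r (drop k v) = rs)))
        \<le> TT * mpow Q (Suc i) x sr * c"
proof -
  define f where "f u = (of_bool (drop i u = rs) :: real)" for u
  have tn: "\<And>z w. trans_prod Q z w \<ge> 0" by (rule trans_prod_nonneg[OF st])
  have c0: "c \<ge> 0" using inner tn gnn by (meson order_trans sum_nonneg mult_nonneg_nonneg)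
  have "(\<Sum>v\<in>lenL N. trans_prod Q x v * (of_bool (take r (drop i v) = rs) * of_bool (take r (drop k v) = rs)))
     \<le> (\<Sum>v\<in>lenL N. trans_prod Q x v * f (take (i+r) v) * g (take d (drop (i+r) v)))"
  proof (intro sum_mono)
    fix v assume v: "v \<in> lenL N"
    show "trans_prod Q x v * (of_bool (take r (drop i v) = rs) * of_bool (take r (drop k v) = rs))
        \<le> trans_prod Q x v * f (take (i+r) v) * g (take d (drop (i+r) v))"
    proof (cases "take r (drop i v) = rs \<and> take r (drop k v) = rs")
      case True
      have "f (take (i+r) v) = 1" using True by (simp add: f_def drop_take)
      moreover have "1 \<le> g (take d (drop (i+r) v))" using H True v by (auto simp: lenL_def)
      ultimately show ?thesis using tn[of x v] by (auto simp: mult_left_mono)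
    next
      case False
      then show ?thesis using tn[of x v] gnn by (auto simp: f_def)
    qed
  qed
  also have "\<dots> = (\<Sum>u\<in>lenL (i+r). trans_prod Q x u * f u * (\<Sum>w\<in>lenL d. trans_prod Q (last (x#u)) w * g w))"
    by (rule markov[OF st]) (use N in simp)
  also have "\<dots> \<le> (\<Sum>u\<in>lenL (i+r). trans_prod Q x u * f u * c)"
  proof (intro sum_mono)
    fix u assume u: "u \<in> lenL (i+r)"
    show "trans_prod Q x u * f u * (\<Sum>w\<in>lenL d. trans_prod Q (last (x#u)) w * g w) \<le> trans_prod Q x u * f u * c"
    proof (cases "drop i u = rs")
      case True
      then show ?thesis using inner last_rs_u[OF True, of x] tn[of x u] by (simp add: f_def mult_left_mono)
    next
      case False
      then show ?thesis by (simp add: f_def)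
    qed
  qed
  also have "\<dots> = c * (\<Sum>u\<in>lenL (i+r). trans_prod Q x u * of_bool (take r (drop i u) = rs))"
    by (simp add: sum_distrib_left f_def lenL_def mult_ac)
  also have "\<dots> = c * (TT * mpow Q (Suc i) x sr)" by (subst EB) simp_all
  finally show ?thesis by (simp add: mult_ac)
qed

lemma pair_bound:
  assumes ik: "i < k" and N: "k + r \<le> N"
  shows "(\<Sum>v\<in>lenL N. trans_prod Q x v * (of_bool (take r (drop i v) = rs) * of_bool (take r (drop k v) = rs)))
        \<le> TT * mpow Q (Suc i) x sr * (theta Q ^ ((k - i) div 4) + TT)"
proof (cases "k - i < r")
  case True
  define d where "d = k - i"
  have dd: "k = i + d" "d < r" using ik True by (auto simp: d_def)
  show ?thesis
  proof (rule pair_gen[where d=d and g="\<lambda>w. of_bool (w = drop (r-d) rs)"])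
    show "i + r + d \<le> N" using N dd by simp
  next
    fix v :: "nucl list" assume a: "take r (drop k v) = rs"
    have "i + r = (r - d) + k" using dd by simp
    hence "take d (drop (i+r) v) = take d (drop (r-d) (drop k v))" by simp
    also have "\<dots> = drop (r-d) (take r (drop k v))"
      using dd by (simp add: take_drop add_ac)
    finally have "take d (drop (i+r) v) = drop (r-d) rs" using a by simp
    then show "(1::real) \<le> of_bool (take d (drop (i+r) v) = drop (r-d) rs)" by simp
  next
    have "(\<Sum>w\<in>lenL d. trans_prod Q (last rs) w * of_bool (w = drop (r-d) rs)) = trans_prod Q (last rs) (drop (r-d) rs)"
      by (rule sum_delta_lenL) (use dd in simp)
    also have "\<dots> \<le> theta Q ^ (length (drop (r-d) rs) div 4)" by (rule decay[OF st irr ap])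
    also have "\<dots> \<le> theta Q ^ ((k - i) div 4) + TT" using dd TT_nn by (simp add: d_def)
    finally show "(\<Sum>w\<in>lenL d. trans_prod Q (last rs) w * of_bool (w = drop (r-d) rs)) \<le> theta Q ^ ((k - i) div 4) + TT" .
  qed simp
next
  case False
  define d where "d = k - i"
  have dd: "k = i + d" "r \<le> d" using ik False by (auto simp: d_def)
  show ?thesis
  proof (rule pair_gen[where d=d and g="\<lambda>w. of_bool (take r (drop (d-r) w) = rs)"])
    show "i + r + d \<le> N" using N dd by simp
  next
    fix v :: "nucl list" assume "take r (drop k v) = rs"
    moreover have "take r (drop (d-r) (take d (drop (i+r) v))) = take r (drop k v)"
      using dd by (simp add: drop_take add.commute)
    ultimately show "(1::real) \<le> of_bool (take r (drop (d-r) (take d (drop (i+r) v))) = rs)" by simp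
  next
    have "(\<Sum>w\<in>lenL d. trans_prod Q (last rs) w * of_bool (take r (drop (d-r) w) = rs)) = TT * mpow Q (Suc (d-r)) (last rs) sr"
      by (rule EB) (use dd in simp)
    also have "\<dots> \<le> TT" using mpow_le1[OF st, of "Suc (d-r)" "last rs" sr] mpow_nonneg[OF st, of "Suc (d-r)" "last rs" sr] TT_nn
      by (intro mult_right_le_one_le) simp_all
    also have "\<dots> \<le> theta Q ^ ((k - i) div 4) + TT" using theta_nonneg by simp
    finally show "(\<Sum>w\<in>lenL d. trans_prod Q (last rs) w * of_bool (take r (drop (d-r) w) = rs)) \<le> theta Q ^ ((k - i) div 4) + TT" .
  qed simp
qed

lemma occ_prob:
  "(\<Sum>v\<in>lenL (r+M). trans_prod Q x v * of_bool (\<exists>k<M. take r (drop k v) = rs))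
     \<ge> (TT * (\<Sum>k<M. mpow Q (Suc k) x sr)) / (1 + 8 / (1 - theta Q) + 2 * M * TT)"
proof -
  define N where "N = r + M"
  define b where "b k v = (of_bool (take r (drop k v) = rs) :: real)" for k v
  define X where "X v = (\<Sum>k<M. b k v)" for v
  define e where "e i = TT * mpow Q (Suc i) x sr" for i
  define EXX where "EXX = TT * (\<Sum>k<M. mpow Q (Suc k) x sr)"
  define \<theta> where "\<theta> = theta Q"
  define Bc where "Bc = 1 + 8 / (1 - \<theta>) + 2 * M * TT"
  have th: "0 \<le> \<theta>" "\<theta> < 1" using theta_nonneg theta_lt1 by (auto simp: \<theta>_def)
  have Bc1: "Bc \<ge> 1" using th TT_nn by (simp add: Bc_def)
  have tn: "\<And>z w. trans_prod Q z w \<ge> 0" by (rule trans_prod_nonneg[OF st])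
  have e_nn: "e i \<ge> 0" for i unfolding e_def by (intro mult_nonneg_nonneg TT_nn mpow_nonneg[OF st])
  have EXXe: "EXX = (\<Sum>i<M. e i)" by (simp add: EXX_def e_def sum_distrib_left)
  have b01: "b k v = 0 \<or> b k v = 1" for k v by (simp add: b_def)
  have Eb: "(\<Sum>v\<in>lenL N. trans_prod Q x v * b k v) = e k" if "k < M" for k
    unfolding b_def e_def by (rule EB) (use that in \<open>simp add: N_def\<close>)
  have E1: "(\<Sum>v\<in>lenL N. trans_prod Q x v * X v) = EXX"
  proof -
    have "(\<Sum>v\<in>lenL N. trans_prod Q x v * X v) = (\<Sum>k<M. \<Sum>v\<in>lenL N. trans_prod Q x v * b k v)"
      unfolding X_def sum_distrib_left by (rule sum.swap)
    also have "\<dots> = (\<Sum>k<M. e k)" by (intro sum.cong refl Eb) simp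
    finally show ?thesis using EXXe by simp
  qed
  have Ebb: "(\<Sum>v\<in>lenL N. trans_prod Q x v * (b i v * b k v)) \<le> e i * (\<theta> ^ ((k - i) div 4) + TT)"
    if "i < k" "k < M" for i k
    unfolding b_def e_def \<theta>_def by (rule pair_bound) (use that in \<open>simp_all add: N_def\<close>)
  have inner: "(\<Sum>k\<in>{i<..<M}. (\<theta> ^ ((k - i) div 4) + TT)) \<le> 4 / (1 - \<theta>) + M * TT" for i
  proof -
    have "(\<Sum>k\<in>{i<..<M}. (\<theta> ^ ((k - i) div 4) + TT)) = (\<Sum>k\<in>{i<..<M}. \<theta> ^ ((k - i) div 4)) + card {i<..<M} * TT"
      by (simp add: sum.distrib)
    also have "(\<Sum>k\<in>{i<..<M}. \<theta> ^ ((k - i) div 4)) \<le> (\<Sum>d<M. \<theta> ^ (d div 4))"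
      by (rule shift_sum_le[where h="\<lambda>d. \<theta> ^ (d div 4)"]) (use th in simp)
    also have "(\<Sum>d<M. \<theta> ^ (d div 4)) \<le> 4 / (1 - \<theta>)" by (rule geo_div4) (use th in auto)
    also have "card {i<..<M} * TT \<le> M * TT" using TT_nn by (intro mult_right_mono) auto
    finally show ?thesis by simp
  qed
  have E2: "(\<Sum>v\<in>lenL N. trans_prod Q x v * (X v)^2) \<le> EXX * Bc"
  proof -
    have "(\<Sum>v\<in>lenL N. trans_prod Q x v * (X v)^2)
        = (\<Sum>v\<in>lenL N. trans_prod Q x v * (\<Sum>i<M. b i v * (1 + 2 * (\<Sum>k\<in>{i<..<M}. b k v))))"
      unfolding X_def by (subst sq_count) (use b01 in auto)
    also have "\<dots> = (\<Sum>i<M. (\<Sum>v\<in>lenL N. trans_prod Q x v * b i v)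
                  + 2 * (\<Sum>k\<in>{i<..<M}. \<Sum>v\<in>lenL N. trans_prod Q x v * (b i v * b k v)))"
    proof -
      have "\<And>v. trans_prod Q x v * (\<Sum>i<M. b i v * (1 + 2 * (\<Sum>k\<in>{i<..<M}. b k v)))
          = (\<Sum>i<M. trans_prod Q x v * b i v + 2 * (\<Sum>k\<in>{i<..<M}. trans_prod Q x v * (b i v * b k v)))"
        by (simp add: sum_distrib_left distrib_left mult_ac)
      hence "(\<Sum>v\<in>lenL N. trans_prod Q x v * (\<Sum>i<M. b i v * (1 + 2 * (\<Sum>k\<in>{i<..<M}. b k v))))
          = (\<Sum>v\<in>lenL N. \<Sum>i<M. trans_prod Q x v * b i v + 2 * (\<Sum>k\<in>{i<..<M}. trans_prod Q x v * (b i v * b k v)))"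
        by simp
      also have "\<dots> = (\<Sum>i<M. \<Sum>v\<in>lenL N. trans_prod Q x v * b i v + 2 * (\<Sum>k\<in>{i<..<M}. trans_prod Q x v * (b i v * b k v)))"
        by (rule sum.swap)
      also have "\<dots> = (\<Sum>i<M. (\<Sum>v\<in>lenL N. trans_prod Q x v * b i v)
                  + 2 * (\<Sum>k\<in>{i<..<M}. \<Sum>v\<in>lenL N. trans_prod Q x v * (b i v * b k v)))"
        by (simp add: sum.distrib sum_distrib_left sum.swap[of _ "lenL N"])
      finally show ?thesis .
    qed
    also have "\<dots> \<le> (\<Sum>i<M. e i + 2 * (\<Sum>k\<in>{i<..<M}. e i * (\<theta> ^ ((k - i) div 4) + TT)))"
      by (intro sum_mono add_mono mult_left_mono) (auto simp: Eb Ebb)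
    also have "\<dots> = (\<Sum>i<M. e i * (1 + 2 * (\<Sum>k\<in>{i<..<M}. (\<theta> ^ ((k - i) div 4) + TT))))"
      by (simp add: sum_distrib_left distrib_left mult_ac)
    also have "\<dots> \<le> (\<Sum>i<M. e i * Bc)"
    proof (intro sum_mono mult_left_mono e_nn)
      fix i show "1 + 2 * (\<Sum>k\<in>{i<..<M}. (\<theta> ^ ((k - i) div 4) + TT)) \<le> Bc"
        using inner[of i] by (simp add: Bc_def)
    qed
    also have "\<dots> = EXX * Bc" by (simp add: EXXe sum_distrib_right)
    finally show ?thesis .
  qed
  define lm where "lm = 1 / Bc"
  have lam: "lm > 0" "lm * Bc = 1" using Bc1 by (auto simp: lm_def)
  have pw: "2 * lm * X v - lm^2 * (X v)^2 \<le> of_bool (\<exists>k<M. take r (drop k v) = rs)" for v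
  proof (cases "\<exists>k<M. take r (drop k v) = rs")
    case True
    have "0 \<le> (lm * X v - 1)^2" by simp
    then show ?thesis using True by (simp add: power2_eq_square algebra_simps)
  next
    case False
    hence "X v = 0" by (simp add: X_def b_def)
    then show ?thesis by simp
  qed
  have "2 * lm * EXX - lm^2 * (EXX * Bc) \<le> 2 * lm * EXX - lm^2 * (\<Sum>v\<in>lenL N. trans_prod Q x v * (X v)^2)"
    using E2 by (simp add: mult_left_mono)
  also have "\<dots> = (\<Sum>v\<in>lenL N. trans_prod Q x v * (2 * lm * X v - lm^2 * (X v)^2))"
    unfolding E1[symmetric] by (simp add: sum_subtractf sum_distrib_left right_diff_distrib mult_ac)
  also have "\<dots> \<le> (\<Sum>v\<in>lenL N. trans_prod Q x v * of_bool (\<exists>k<M. take r (drop k v) = rs))"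
    by (intro sum_mono mult_left_mono pw tn)
  finally have "2 * lm * EXX - lm^2 * (EXX * Bc) \<le> (\<Sum>v\<in>lenL N. trans_prod Q x v * of_bool (\<exists>k<M. take r (drop k v) = rs))" .
  moreover have "2 * lm * EXX - lm^2 * (EXX * Bc) = EXX / Bc"
    using lam Bc1 by (simp add: lm_def power2_eq_square field_simps)
  ultimately show ?thesis by (simp add: N_def EXX_def Bc_def \<theta>_def)
qed

end


definition Mw :: "nat \<Rightarrow> real \<Rightarrow> nat" where "Mw L t = nat \<lceil>1 / t\<rceil> + 2 * L"
definition dlt :: "(nucl \<Rightarrow> nucl \<Rightarrow> real) \<Rightarrow> nat \<Rightarrow> real \<Rightarrow> real" where
  "dlt Q L \<epsilon> = \<epsilon> / (8 * (5 + 8 / (1 - theta Q) + 4 * L))"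

definition noocc :: "nucl list \<Rightarrow> nucl list \<Rightarrow> bool" where
  "noocc s w \<longleftrightarrow> (\<forall>m \<le> length w. \<not> ends_with_word s (take m w))"

lemma ends_append: "ends_with_word s t \<Longrightarrow> ends_with_word s (u @ t)"
  unfolding ends_with_word_def by auto

lemma noocc_appendD: assumes "noocc s (u @ w)" shows "noocc s u" "noocc s w"
proof -
  show "noocc s u" using assms unfolding noocc_def
    by (metis append_eq_conv_conj le_add1 length_append order_trans take_take min.absorb1)
  show "noocc s w" unfolding noocc_def
  proof (intro allI impI notI)
    fix m assume "m \<le> length w" "ends_with_word s (take m w)"
    hence "ends_with_word s (take (length u + m) (u @ w))" by (simp add: ends_append)
    moreover have "length u + m \<le> length (u @ w)" using \<open>m \<le> length w\<close> by simp
    ultimately show False using assms unfolding noocc_def by blast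
  qed
qed

lemma noocc_take: "noocc s v \<Longrightarrow> noocc s (take n v)"
  unfolding noocc_def by (simp add: min_def)

lemma occ_noocc:
  assumes "noocc s u" "k + length s \<le> length u" "take (length s) (drop k u) = rev s"
  shows False
proof -
  have "ends_with_word s (take (k + length s) u)"
    unfolding ends_with_word_def using assms(2,3) by (simp add: drop_take)
  thus False using assms(1,2) unfolding noocc_def by blast
qed

context fixes Q :: "nucl \<Rightarrow> nucl \<Rightarrow> real" and s :: "nucl list" and L :: nat and \<epsilon> :: real
  assumes st: "stochastic Q" and irr: "irreducible_chain Q" and ap: "aperiodic_chain Q"
    and sne: "length s \<ge> 1"
    and hw: "\<forall>x y b M. (\<Sum>k<M. mpow Q (b+k) x y) \<ge> \<epsilon>/4 * (real M - real L)"
    and e0: "\<epsilon> > 0" and e1: "\<epsilon> \<le> 1"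
    and TTpos: "trans_prod Q (hd (rev s)) (tl (rev s)) > 0"
begin

abbreviation "rl \<equiv> length s"
abbreviation "rsl \<equiv> rev s"
abbreviation "srl \<equiv> hd (rev s)"
abbreviation "TL \<equiv> trans_prod Q (hd (rev s)) (tl (rev s))"

lemma occ_delta:
  "(\<Sum>v\<in>lenL (rl + Mw L TL). trans_prod Q x v * of_bool (\<exists>k<Mw L TL. take rl (drop k v) = rsl)) \<ge> dlt Q L \<epsilon>"
proof -
  define M where "M = Mw L TL"
  define \<theta> where "\<theta> = theta Q"
  have th: "0 \<le> \<theta>" "\<theta> < 1" using theta_nonneg theta_lt1 by (auto simp: \<theta>_def)
  have TT1: "TL \<le> 1" by (rule trans_prod_le1[OF st])
  have M1: "real M \<ge> 1 / TL" unfolding M_def Mw_def using real_nat_ceiling_ge[of "1/TL"] by simp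
  have M2: "real M \<le> 1 / TL + 1 + 2 * L" unfolding M_def Mw_def
    using TTpos by (simp add: of_nat_nat)
  have M3: "real M \<ge> 2 * L" unfolding M_def Mw_def by simp
  have EXX: "TL * (\<Sum>k<M. mpow Q (Suc k) x srl) \<ge> \<epsilon> / 8"
  proof -
    have h: "(\<Sum>k<M. mpow Q (1+k) x srl) \<ge> \<epsilon>/4 * (real M - real L)" using hw by blast
    have "(\<Sum>k<M. mpow Q (1+k) x srl) = (\<Sum>k<M. mpow Q (Suc k) x srl)" by (simp only: plus_1_eq_Suc)
    hence "(\<Sum>k<M. mpow Q (Suc k) x srl) \<ge> \<epsilon>/4 * (real M - real L)" using h by linarith
    hence "TL * (\<Sum>k<M. mpow Q (Suc k) x srl) \<ge> TL * (\<epsilon>/4 * (real M - real L))"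
      using TTpos by (simp add: mult_left_mono)
    moreover have "TL * (real M - real L) \<ge> 1/2"
    proof -
      have "real M - real L \<ge> real M / 2" using M3 by simp
      hence "TL * (real M - real L) \<ge> TL * (real M / 2)" using TTpos by (simp add: mult_left_mono)
      moreover have "TL * real M \<ge> 1" using M1 TTpos by (simp add: field_simps)
      ultimately show ?thesis by simp
    qed
    moreover have "TL * (\<epsilon>/4 * (real M - real L)) = \<epsilon>/4 * (TL * (real M - real L))" by simp
    moreover have "\<epsilon>/4 * (TL * (real M - real L)) \<ge> \<epsilon>/4 * (1/2)"
      by (rule mult_left_mono) (use e0 \<open>TL * (real M - real L) \<ge> 1/2\<close> in auto)
    ultimately show ?thesis by linarith
  qed
  have Bc: "1 + 8 / (1 - \<theta>) + 2 * M * TL \<le> 5 + 8 / (1 - \<theta>) + 4 * L"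
  proof -
    have "real M * TL \<le> (1 / TL + 1 + 2 * L) * TL" using M2 TTpos by (simp add: mult_right_mono)
    also have "\<dots> = 1 + TL + 2 * L * TL" using TTpos by (simp add: field_simps)
    also have "\<dots> \<le> 2 + 2 * L"
    proof -
      have "2 * real L * TL \<le> 2 * real L * 1" using TT1 by (intro mult_left_mono) auto
      thus ?thesis using TT1 by simp
    qed
    finally show ?thesis by simp
  qed
  have Bc0: "1 + 8 / (1 - \<theta>) + 2 * M * TL > 0" using th TTpos by (simp add: add_pos_nonneg)
  have "dlt Q L \<epsilon> = (\<epsilon> / 8) / (5 + 8 / (1 - \<theta>) + 4 * L)" by (simp add: dlt_def \<theta>_def)
  also have "\<dots> \<le> (TL * (\<Sum>k<M. mpow Q (Suc k) x srl)) / (1 + 8 / (1 - \<theta>) + 2 * M * TL)"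
    by (rule frac_le) (use EXX Bc Bc0 e0 in auto)
  also have "\<dots> \<le> (\<Sum>v\<in>lenL (rl + M). trans_prod Q x v * of_bool (\<exists>k<M. take rl (drop k v) = rsl))"
    using occ_prob[OF st irr ap sne, where M=M and x=x] by (simp add: \<theta>_def)
  finally show ?thesis by (simp add: M_def)
qed

definition G where "G x n = (\<Sum>v\<in>lenL n. trans_prod Q x v * of_bool (noocc s v))"

lemma G_nn: "G x n \<ge> 0"
  unfolding G_def by (intro sum_nonneg mult_nonneg_nonneg trans_prod_nonneg[OF st]) auto

lemma G_le1: "G x n \<le> 1"
proof -
  have "G x n \<le> (\<Sum>v\<in>lenL n. trans_prod Q x v)"
    unfolding G_def by (intro sum_mono) (auto intro: mult_right_le_one_le trans_prod_nonneg[OF st])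
  thus ?thesis using sum_trans[OF st] by simp
qed

lemma G_mono: "n \<le> m \<Longrightarrow> G x m \<le> G x n"
proof -
  assume nm: "n \<le> m"
  have "G x m \<le> (\<Sum>v\<in>lenL m. trans_prod Q x v * of_bool (noocc s (take n v)))"
    unfolding G_def by (intro sum_mono mult_left_mono) (auto simp: noocc_take trans_prod_nonneg[OF st])
  also have "\<dots> = G x n" unfolding G_def by (rule prefix_sum[OF st nm])
  finally show ?thesis .
qed

lemma G_block:
  assumes c: "\<And>z. G z n \<le> c"
  shows "G x (rl + Mw L TL + n) \<le> (1 - dlt Q L \<epsilon>) * c"
proof -
  define W where "W = rl + Mw L TL"
  define M where "M = Mw L TL"
  have c0: "c \<ge> 0" using c[of x] G_nn[of x n] by linarith
  have tn: "\<And>z w. trans_prod Q z w \<ge> 0" by (rule trans_prod_nonneg[OF st])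
  have "G x (W + n) = (\<Sum>u\<in>lenL W. \<Sum>w\<in>lenL n. trans_prod Q x u * (trans_prod Q (last (x#u)) w * of_bool (noocc s (u@w))))"
    unfolding G_def sum_lenL_add by (simp add: trans_prod_append mult.assoc)
  also have "\<dots> \<le> (\<Sum>u\<in>lenL W. \<Sum>w\<in>lenL n. trans_prod Q x u * (of_bool (noocc s u) * (trans_prod Q (last (x#u)) w * of_bool (noocc s w))))"
    by (intro sum_mono mult_left_mono) (auto dest: noocc_appendD simp: tn)
  also have "\<dots> = (\<Sum>u\<in>lenL W. trans_prod Q x u * of_bool (noocc s u) * G (last (x#u)) n)"
    unfolding G_def by (simp only: sum_distrib_left mult.assoc)
  also have "\<dots> \<le> (\<Sum>u\<in>lenL W. trans_prod Q x u * of_bool (noocc s u) * c)"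
    by (intro sum_mono mult_left_mono c) (auto simp: tn)
  also have "\<dots> \<le> (\<Sum>u\<in>lenL W. trans_prod Q x u * (1 - of_bool (\<exists>k<M. take rl (drop k u) = rsl)) * c)"
  proof (intro sum_mono mult_right_mono mult_left_mono c0)
    fix u assume "u \<in> lenL W"
    then show "of_bool (noocc s u) \<le> (1::real) - of_bool (\<exists>k<M. take rl (drop k u) = rsl)"
    proof (cases "\<exists>k<M. take rl (drop k u) = rsl")
      case True
      then obtain k where k: "k < M" "take rl (drop k u) = rsl" by blast
      have "\<not> noocc s u"
      proof
        assume "noocc s u"
        then show False using occ_noocc[OF _ _ k(2)] k(1) \<open>u \<in> lenL W\<close> by (simp add: lenL_def W_def M_def)
      qed
      then show ?thesis using True by simp
    next
      case False then show ?thesis by auto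
    qed
  qed (auto simp: tn)
  also have "\<dots> = (1 - (\<Sum>u\<in>lenL W. trans_prod Q x u * of_bool (\<exists>k<M. take rl (drop k u) = rsl))) * c"
    by (simp add: sum_distrib_right[symmetric] right_diff_distrib sum_subtractf sum_trans[OF st])
  also have "\<dots> \<le> (1 - dlt Q L \<epsilon>) * c"
    using occ_delta[where x=x] c0 by (intro mult_right_mono) (simp_all add: W_def M_def)
  finally show ?thesis by (simp add: W_def)
qed

lemma G_pow: "G x (k * (rl + Mw L TL)) \<le> (1 - dlt Q L \<epsilon>) ^ k"
proof (induction k arbitrary: x)
  case 0 then show ?case using G_le1 by simp
next
  case (Suc k)
  have "G x (Suc k * (rl + Mw L TL)) = G x (rl + Mw L TL + k * (rl + Mw L TL))" by (simp add: add_ac)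
  also have "\<dots> \<le> (1 - dlt Q L \<epsilon>) * (1 - dlt Q L \<epsilon>) ^ k" by (rule G_block) (rule Suc.IH)
  finally show ?case by simp
qed

end


lemma one_div_ge: fixes x :: real assumes "0 \<le> x" "x < 1" shows "1 + x \<le> 1 / (1 - x)"
proof -
  have "(1 + x) * (1 - x) \<le> 1" by (simp add: algebra_simps)
  thus ?thesis using assms by (simp add: field_simps)
qed

context fixes Q :: "nucl \<Rightarrow> nucl \<Rightarrow> real" and s :: "nucl list" and L :: nat and \<epsilon> :: real
    and p :: "nucl \<Rightarrow> real"
  assumes st: "stochastic Q" and irr: "irreducible_chain Q" and ap: "aperiodic_chain Q"
    and sne: "length s \<ge> 1"
    and hw: "\<forall>x y b M. (\<Sum>k<M. mpow Q (b+k) x y) \<ge> \<epsilon>/4 * (real M - real L)"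
    and e0: "\<epsilon> > 0" and e1: "\<epsilon> \<le> 1"
    and TTpos: "trans_prod Q (hd (rev s)) (tl (rev s)) > 0"
    and inv: "invariant_measure Q p"
begin

abbreviation "r6 \<equiv> length s"
abbreviation "rs6 \<equiv> rev s"
abbreviation "sr6 \<equiv> hd (rev s)"
abbreviation "T6 \<equiv> trans_prod Q (hd (rev s)) (tl (rev s))"
abbreviation "W6 \<equiv> length s + Mw L (trans_prod Q (hd (rev s)) (tl (rev s)))"

lemma p_nn: "p u \<ge> 0" using inv by (simp add: invariant_measure_def)
lemma p_sum: "(\<Sum>u\<in>UNIV. p u) = 1" using inv by (simp add: invariant_measure_def)
lemma p_le1: "p u \<le> 1" using p_sum p_nn by (metis UNIV_I finite_class.finite_UNIV member_le_sum)

lemma path_nn: "path_prob p Q w \<ge> 0"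
  by (cases w) (auto intro!: mult_nonneg_nonneg p_nn trans_prod_nonneg[OF st])

lemma G_bound: "G Q s x m \<le> (1 - dlt Q L \<epsilon>) ^ (m div W6)"
proof -
  have "G Q s x m \<le> G Q s x ((m div W6) * W6)"
    by (rule G_mono[OF st irr ap sne hw e0 e1 TTpos]) simp
  also have "\<dots> \<le> (1 - dlt Q L \<epsilon>) ^ (m div W6)" by (rule G_pow[OF st irr ap sne hw e0 e1 TTpos])
  finally show ?thesis .
qed

lemma wait0: "waiting_prob p Q s 0 = 0"
proof -
  have "{w. length w = 0 \<and> ends_with_word s w \<and> (\<forall>m<0. \<not> ends_with_word s (take m w))} = {}"
    using sne by (auto simp: ends_with_word_def)
  thus ?thesis by (simp add: waiting_prob_def)
qed

lemma wait_bound: "waiting_prob p Q s (Suc n) \<le> (1 - dlt Q L \<epsilon>) ^ ((n - 1) div W6)"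
proof -
  define P where "P w = (ends_with_word s w \<and> (\<forall>m<Suc n. \<not> ends_with_word s (take m w)))" for w
  have S: "{w. length w = Suc n \<and> ends_with_word s w \<and> (\<forall>m<Suc n. \<not> ends_with_word s (take m w))}
         = {w\<in>lenL (Suc n). P w}" by (auto simp: lenL_def P_def)
  have "waiting_prob p Q s (Suc n) = (\<Sum>w\<in>lenL (Suc n). if P w then path_prob p Q w else 0)"
    unfolding waiting_prob_def S by (rule sum.inter_filter) simp
  also have "\<dots> \<le> (\<Sum>w\<in>lenL (Suc n). path_prob p Q w * of_bool (noocc s (take (n - 1) (tl w))))"
  proof (intro sum_mono)
    fix w assume w: "w \<in> lenL (Suc n)"
    show "(if P w then path_prob p Q w else 0) \<le> path_prob p Q w * of_bool (noocc s (take (n - 1) (tl w)))"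
    proof (cases "P w")
      case True
      obtain x v where wv: "w = x # v" using w by (cases w) (auto simp: lenL_def)
      have lv: "length v = n" using w wv by (simp add: lenL_def)
      have "noocc s (take (n - 1) v)" unfolding noocc_def
      proof (intro allI impI notI)
        fix m assume m: "m \<le> length (take (n - 1) v)" and e: "ends_with_word s (take m (take (n - 1) v))"
        have "m \<le> n - 1" using m by simp
        hence "take m (take (n - 1) v) = take m v" by (simp add: min_def)
        hence "ends_with_word s (take (Suc m) w)" using e wv ends_append[of s "take m v" "[x]"] by simp
        moreover have "Suc m < Suc n"
        proof (cases "n = 0")
          case True
          have "ends_with_word s []" using e True by simp
          hence False using sne by (simp add: ends_with_word_def)
          thus ?thesis ..
        next
          case False thus ?thesis using \<open>m \<le> n - 1\<close> by simp
        qed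
        ultimately show False using True by (simp add: P_def)
      qed
      then show ?thesis using True wv by simp
    next
      case False then show ?thesis using path_nn[of w] by simp
    qed
  qed
  also have "\<dots> = (\<Sum>x\<in>UNIV. p x * (\<Sum>v\<in>lenL n. trans_prod Q x v * of_bool (noocc s (take (n - 1) v))))"
    unfolding sum_lenL_Suc by (simp only: path_prob.simps sum_distrib_left mult.assoc list.sel)
  also have "\<dots> = (\<Sum>x\<in>UNIV. p x * G Q s x (n - 1))"
  proof -
    have eqG: "(\<Sum>v\<in>lenL n. trans_prod Q x v * of_bool (noocc s (take (n - 1) v))) = G Q s x (n - 1)" for x
      unfolding G_def[OF st irr ap sne hw e0 e1 TTpos] by (rule prefix_sum[OF st, where f="\<lambda>u. of_bool (noocc s u)"]) simp
    show ?thesis by (simp only: eqG)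
  qed
  also have "\<dots> \<le> (\<Sum>x\<in>UNIV. p x * (1 - dlt Q L \<epsilon>) ^ ((n - 1) div W6))"
    by (intro sum_mono mult_left_mono G_bound p_nn)
  also have "\<dots> = (1 - dlt Q L \<epsilon>) ^ ((n - 1) div W6)"
    by (simp add: sum_distrib_right[symmetric] p_sum)
  finally show ?thesis .
qed

lemma wait_nn: "waiting_prob p Q s n \<ge> 0"
  unfolding waiting_prob_def by (intro sum_nonneg path_nn)

lemma radius_s:
  "conv_radius (waiting_prob p Q s)
     \<ge> ereal (1 + (dlt Q L \<epsilon> / (4 / (1 - theta Q) + 2 + 2 * real L)) * word_prob p Q s)"
proof -
  define \<delta> where "\<delta> = dlt Q L \<epsilon>"
  define W where "W = W6"
  define \<theta> where "\<theta> = theta Q"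
  define D where "D = 4 / (1 - \<theta>) + 2 + 2 * real L"
  define wp where "wp = word_prob p Q s"
  have th: "0 \<le> \<theta>" "\<theta> < 1" using theta_nonneg theta_lt1 by (auto simp: \<theta>_def)
  have den: "8 * (5 + 8 / (1 - \<theta>) + 4 * real L) \<ge> 40" using th by simp
  have d0: "\<delta> > 0" using e0 den unfolding \<delta>_def dlt_def \<theta>_def by (intro divide_pos_pos) auto
  have d1: "\<delta> < 1"
  proof -
    have "\<delta> \<le> 1 / 40" unfolding \<delta>_def dlt_def \<theta>_def[symmetric]
      using e1 e0 den by (intro frac_le) auto
    thus ?thesis by simp
  qed
  have W1: "W \<ge> 1" using sne by (simp add: W_def)
  define \<rho> where "\<rho> = 1 - \<delta> / W"
  have dW: "0 < \<delta> / W" "\<delta> / W < 1" using d0 d1 W1 by (auto simp: field_simps)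
  have rho: "0 < \<rho>" "\<rho> < 1" using dW by (auto simp: \<rho>_def)
  have bern: "1 - \<delta> \<le> \<rho> ^ W"
    using Bernoulli_inequality[of "- (\<delta> / W)" W] dW W1 by (simp add: \<rho>_def)
  have abound: "waiting_prob p Q s n \<le> \<rho> ^ n / \<rho> ^ (W + 1)" for n
  proof (cases n)
    case 0 then show ?thesis using wait0 rho by simp
  next
    case (Suc m)
    define q where "q = (m - 1) div W"
    have "waiting_prob p Q s n \<le> (1 - \<delta>) ^ q" unfolding Suc q_def \<delta>_def W_def by (rule wait_bound)
    also have "\<dots> \<le> (\<rho> ^ W) ^ q" using bern d1 by (intro power_mono) auto
    also have "\<dots> = \<rho> ^ (W * q)" by (simp add: power_mult)
    also have "\<dots> \<le> \<rho> ^ n / \<rho> ^ (W + 1)"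
    proof -
      have e: "m - 1 = W * q + (m - 1) mod W" unfolding q_def by simp
      have "(m - 1) mod W < W" using W1 by simp
      hence "m - 1 < W * q + W" using e by linarith
      hence "n \<le> W * q + (W + 1)" using Suc by linarith
      hence "\<rho> ^ (W * q + (W + 1)) \<le> \<rho> ^ n" using rho by (intro power_decreasing) auto
      thus ?thesis using rho by (simp add: power_add field_simps)
    qed
    finally show ?thesis .
  qed
  have rad: "conv_radius (waiting_prob p Q s) \<ge> ereal (1 / \<rho>)"
  proof (rule conv_radius_geI_ex')
    fix t :: real assume t: "0 < t" "ereal t < ereal (1 / \<rho>)"
    hence rt: "\<rho> * t < 1" "0 \<le> \<rho> * t" using rho by (auto simp: field_simps)
    show "summable (\<lambda>n. waiting_prob p Q s n * of_real t ^ n)"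
    proof (rule summable_comparison_test')
      show "summable (\<lambda>n. (\<rho> * t) ^ n / \<rho> ^ (W + 1))"
        by (rule summable_divide, rule summable_geometric) (use rt in simp)
    next
      fix n :: nat
      have "norm (waiting_prob p Q s n * of_real t ^ n) = waiting_prob p Q s n * t ^ n"
        using wait_nn t by simp
      also have "\<dots> \<le> \<rho> ^ n / \<rho> ^ (W + 1) * t ^ n"
        using abound[of n] t by (intro mult_right_mono) auto
      also have "\<dots> = (\<rho> * t) ^ n / \<rho> ^ (W + 1)" by (simp add: power_mult_distrib)
      finally show "norm (waiting_prob p Q s n * of_real t ^ n) \<le> (\<rho> * t) ^ n / \<rho> ^ (W + 1)" .
    qed
  qed
  have step1: "1 + \<delta> / W \<le> 1 / \<rho>" unfolding \<rho>_def by (rule one_div_ge) (use dW in auto)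
  have wpeq: "wp = p sr6 * T6"
  proof -
    have "rs6 = sr6 # tl rs6" using sne by (cases "rev s") auto
    then show ?thesis unfolding wp_def word_prob_def by (metis path_prob.simps(2))
  qed
  have wp0: "wp \<ge> 0" using wpeq p_nn TTpos by simp
  have wpT: "wp \<le> T6" using wpeq p_le1[of sr6] TTpos by (simp add: mult_left_le_one_le)
  have wp1: "wp \<le> 1" using wpT trans_prod_le1[OF st] by (meson order_trans)
  have rT: "real r6 * T6 \<le> 4 / (1 - \<theta>)"
  proof -
    have "T6 \<le> \<theta> ^ ((r6 - 1) div 4)" using decay[OF st irr ap, of sr6 "tl rs6"] by (simp add: \<theta>_def)
    hence "real r6 * T6 \<le> (\<Sum>d<r6. \<theta> ^ ((r6 - 1) div 4))" by (simp add: mult_left_mono)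
    also have "\<dots> \<le> (\<Sum>d<r6. \<theta> ^ (d div 4))"
      using th by (intro sum_mono power_decreasing) (auto intro: div_le_mono)
    also have "\<dots> \<le> 4 / (1 - \<theta>)" by (rule geo_div4) (use th in auto)
    finally show ?thesis .
  qed
  have MT: "real (Mw L T6) \<le> 1 / T6 + 1 + 2 * L" unfolding Mw_def
    using TTpos by (simp add: of_nat_nat)
  have Mwp: "real (Mw L T6) * wp \<le> 2 + 2 * L"
  proof -
    have "real (Mw L T6) * wp \<le> (1 / T6 + 1 + 2 * L) * wp" using MT wp0 by (rule mult_right_mono)
    also have "\<dots> = wp / T6 + (1 + 2 * real L) * wp" by (simp add: field_simps)
    also have "wp / T6 \<le> 1" using wpT TTpos by simp
    also have "(1 + 2 * real L) * wp \<le> (1 + 2 * real L) * 1" using wp1 by (intro mult_left_mono) auto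
    finally show ?thesis by simp
  qed
  have WD: "real W * wp \<le> D"
  proof -
    have "real W * wp = real r6 * wp + real (Mw L T6) * wp" by (simp add: W_def distrib_right)
    also have "real r6 * wp \<le> real r6 * T6" using wpT by (intro mult_left_mono) auto
    finally show ?thesis using rT Mwp by (simp add: D_def)
  qed
  have D0: "D > 0" using th by (simp add: D_def add_pos_nonneg)
  have step2: "\<delta> / D * wp \<le> \<delta> / W"
  proof -
    have "\<delta> * wp * W \<le> \<delta> * D" using WD d0 by (simp add: mult.commute mult.left_commute mult_left_mono)
    thus ?thesis using D0 W1 by (simp add: field_simps)
  qed
  have "ereal (1 + \<delta> / D * wp) \<le> ereal (1 / \<rho>)" using step1 step2 by simp
  also note rad
  finally show ?thesis by (simp add: \<delta>_def D_def wp_def \<theta>_def)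
qed

end

theorem proposition2:
  fixes Q :: "nucl \<Rightarrow> nucl \<Rightarrow> real" and p :: "nucl \<Rightarrow> real"
  assumes "stochastic Q" and "irreducible_chain Q" and "aperiodic_chain Q"
    and "invariant_measure Q p"
  shows "\<exists>\<kappa>>0. \<forall>s :: nucl list. length s \<ge> 1 \<longrightarrow> word_prob p Q s > 0 \<longrightarrow>
           conv_radius (waiting_prob p Q s) \<ge> ereal (1 + \<kappa> * word_prob p Q s)"
proof -
  note st = assms(1) and irr = assms(2) and ap = assms(3) and inv = assms(4)
  obtain L \<epsilon> where e0: "\<epsilon> > 0" and e1: "\<epsilon> \<le> 1"
    and hw: "\<forall>x y b M. (\<Sum>k<M. mpow Q (b+k) x y) \<ge> \<epsilon>/4 * (real M - real L)"
    using window[OF st irr] by blast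
  define \<kappa> where "\<kappa> = dlt Q L \<epsilon> / (4 / (1 - theta Q) + 2 + 2 * real L)"
  have th: "0 \<le> theta Q" "theta Q < 1" using theta_nonneg theta_lt1 by auto
  have k0: "\<kappa> > 0" unfolding \<kappa>_def dlt_def using e0 th
    by (intro divide_pos_pos mult_pos_pos add_pos_nonneg) auto
  have "\<forall>s :: nucl list. length s \<ge> 1 \<longrightarrow> word_prob p Q s > 0 \<longrightarrow>
           conv_radius (waiting_prob p Q s) \<ge> ereal (1 + \<kappa> * word_prob p Q s)"
  proof (intro allI impI)
    fix s :: "nucl list" assume sne: "length s \<ge> 1" and wp: "word_prob p Q s > 0"
    have "rev s = hd (rev s) # tl (rev s)" using sne by (cases "rev s") auto
    hence wpeq: "word_prob p Q s = p (hd (rev s)) * trans_prod Q (hd (rev s)) (tl (rev s))"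
      unfolding word_prob_def by (metis path_prob.simps(2))
    have TTpos: "trans_prod Q (hd (rev s)) (tl (rev s)) > 0"
    proof (rule ccontr)
      assume "\<not> trans_prod Q (hd (rev s)) (tl (rev s)) > 0"
      hence "trans_prod Q (hd (rev s)) (tl (rev s)) = 0" using trans_prod_nonneg[OF st, where x="hd (rev s)" and u="tl (rev s)"] by linarith
      thus False using wp wpeq by simp
    qed
    show "conv_radius (waiting_prob p Q s) \<ge> ereal (1 + \<kappa> * word_prob p Q s)"
      using radius_s[OF st irr ap sne hw e0 e1 TTpos inv] by (simp add: \<kappa>_def)
  qed
  thus ?thesis using k0 by blast
qed

end
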